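(* Let $C,C_1,C_2,C_3,C_4$ be circles with distinct centers $u,u_1,u_2,u_3,u_4$ such that, for each $i\in\{1,2,3,4\}$ (indices mod 4), the circles $C,C_i,C_{i+1}$ pass through a common point $P_i$, and let $\tilde P_i$ be the second intersection point of $C_i$ and $C_{i+1}$. Then $\tilde P_1,\dots,\tilde P_4$ lie on a circle $\tilde C$, and its center is the root $z=\tilde u$ different from $z=u$ of $$\frac{(u_2-z)(u_4-z)}{(u_1-z)(u_3-z)}=\frac{(u_2-u)(u_4-u)}{(u_1-u)(u_3-u)},$$ namely $$\tilde u=\frac{uu_1u_3-u_1u_2u_3-uu_2u_4+u_1u_2u_4-u_1u_3u_4+u_2u_3u_4}{uu_1-uu_2+uu_3-u_1u_3-uu_4+u_2u_4}.$$
   Context: All points are assumed in general position so that all the intersection points are distinct and the denominator is nonzero. *)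

theory Defs
  imports Complex_Main
begin

definition circle :: "complex \<Rightarrow> real \<Rightarrow> complex set" where
  "circle c r = {z. cmod (z - c) = r}"

end

theory Submission
  imports Defs
begin

lemma cnj_center:
  fixes p q v R :: complex
  assumes "p\<noteq>0" "q\<noteq>0" "p\<noteq>q" "cnj p = R/p" "cnj q = R/q"
   and "(p - v)*cnj(p-v) = (q-v)*cnj(q-v)"
  shows "cnj v = R*v/(p*q)"
proof -
  have h: "(p - v)*(R/p - cnj v) = (q-v)*(R/q-cnj v)" using assms by simp
  have "(q - p) * (cnj v * p * q - R*v) = p*q*((p - v)*(R/p - cnj v) - (q-v)*(R/q-cnj v))"
    using assms(1,2) by (simp add: field_simps) 
  hence "(q - p) * (cnj v * p * q - R*v) = 0" using h by simp
  hence "cnj v * p * q = R*v" using assms(3) by simp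
  thus ?thesis using assms(1,2) by (simp add: field_simps)
qed

lemma second_abs:
  fixes p q v1 v2 a b c1 c2 :: complex
  assumes h1: "(q - v1)*(a-c1) = (p-v1)*(b-c1)" and h2: "(q - v2)*(a-c2) = (p-v2)*(b-c2)"
   and qp: "q \<noteq> p" and v: "v1 \<noteq> v2" and c: "c1 \<noteq> c2"
  shows "q = v1 + (v1-v2)*(b - c1)/(c1 - c2)" and "a = b - (q - p)*(c1 - c2)/(v1-v2)"
proof -
  have v': "v1 - v2 \<noteq> 0" and c': "c1 - c2 \<noteq> 0" using v c by auto
  have id1: "(q-p)*(c1-c2) + (a-b)*(v1-v2) = ((p-v1)*(b-c1) - (p-v2)*(b-c2)) - ((q-v1)*(a-c1) - (q-v2)*(a-c2))"
    by (simp add: algebra_simps)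
  have "(q-p)*(c1-c2) + (a-b)*(v1-v2) = 0" unfolding id1 h1 h2 by simp
  hence "(a-b)*(v1-v2) = - ((q-p)*(c1-c2))" by (simp add: add_eq_0_iff)
  hence "a - b = - ((q-p)*(c1-c2)) / (v1-v2)" using v' by (metis nonzero_mult_div_cancel_right)
  hence "a = b + (- ((q-p)*(c1-c2)) / (v1-v2))" by (metis add.commute diff_add_cancel)
  thus ha: "a = b - (q - p)*(c1 - c2)/(v1-v2)" by (simp only: minus_divide_left[symmetric] diff_conv_add_uminus)
  define w where "w = (c1 - c2)/(v1-v2)"
  have ha': "a = b - (q-p)*w" unfolding w_def ha by simp
  have id2: "(q-v1)*(a-c1) - (p-v1)*(b-c1) = (q-p)*(b - c1 - w*(q-v1))"
    unfolding ha' by (simp add: algebra_simps)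
  hence "(q-p)*(b - c1 - w*(q-v1)) = 0" using h1 by simp
  hence "b - c1 = w*(q-v1)" using qp by simp
  hence "q - v1 = (b - c1)/w" using v' c' unfolding w_def by (simp add: field_simps)
  thus "q = v1 + (v1-v2)*(b - c1)/(c1 - c2)" unfolding w_def using v' c' by (simp add: field_simps)
qed

lemma second_int:
  fixes p q v1 v2 :: complex
  assumes "(q - v1)*cnj(q-v1) = (p-v1)*cnj(p-v1)" "(q - v2)*cnj(q-v2) = (p-v2)*cnj(p-v2)"
   "q \<noteq> p" "v1 \<noteq> v2"
  shows "q = v1 + (v1-v2)*(cnj p - cnj v1)/(cnj v1 - cnj v2)" and "cnj q = cnj p - (q - p)*(cnj v1 - cnj v2)/(v1-v2)"
proof -
  have c: "cnj v1 \<noteq> cnj v2" using assms(4) by simp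
  have h1: "(q - v1)*(cnj q - cnj v1) = (p-v1)*(cnj p - cnj v1)" using assms(1) by simp
  have h2: "(q - v2)*(cnj q - cnj v2) = (p-v2)*(cnj p - cnj v2)" using assms(2) by simp
  note r = second_abs[OF h1 h2 assms(3,4) c]
  show "q = v1 + (v1-v2)*(cnj p - cnj v1)/(cnj v1 - cnj v2)" by (rule r(1))
  show "cnj q = cnj p - (q - p)*(cnj v1 - cnj v2)/(v1-v2)" by (rule r(2))
qed


lemma core:
  fixes p1 p2 p3 p4 v1 v2 v3 v4 q R :: complex
  assumes nz: "p1\<noteq>0" "p2\<noteq>0" "p3\<noteq>0" "p4\<noteq>0" "R\<noteq>0"
   and cp: "cnj p1 = R/p1" "cnj p2 = R/p2" "cnj p3 = R/p3" "cnj p4 = R/p4"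
   and cv: "cnj v1 = R*v1/(p4*p1)" "cnj v2 = R*v2/(p1*p2)" "cnj v3 = R*v3/(p2*p3)" "cnj v4 = R*v4/(p3*p4)"
   and v12: "v1 \<noteq> v2" and den: "v2*v4 - v1*v3 \<noteq> 0"
   and q: "q = v1 + (v1-v2)*(cnj p1 - cnj v1)/(cnj v1 - cnj v2)"
   and cq: "cnj q = cnj p1 - (q - p1)*(cnj v1 - cnj v2)/(v1-v2)"
  shows "(q - (- v1*v2*v3 + v1*v2*v4 - v1*v3*v4 + v2*v3*v4)/(v2*v4 - v1*v3)) *
         cnj (q - (- v1*v2*v3 + v1*v2*v4 - v1*v3*v4 + v2*v3*v4)/(v2*v4 - v1*v3)) =
     R * (p2*p4*(v2*v4 - v1*v3) + p4*v2*v3*(v1-v4) - p2*v1*v4*(v2-v3))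
       * (p1*p3*(v2*v4 - v1*v3) + p3*v1*v2*(v3-v4) + p1*v3*v4*(v1-v2))
       / (p1*p2*p3*p4*(v2*v4 - v1*v3)^2)"
proof -
  define D1 where "D1 = v2*p4 - v1*p2"
  define dn where "dn = v2*v4 - v1*v3"
  define nm where "nm = - v1*v2*v3 + v1*v2*v4 - v1*v3*v4 + v2*v3*v4"
  define M1 where "M1 = p2*p4*(v2*v4 - v1*v3) + p4*v2*v3*(v1-v4) - p2*v1*v4*(v2-v3)"
  define K1 where "K1 = p1*p3*(v2*v4 - v1*v3) + p3*v1*v2*(v3-v4) + p1*v3*v4*(v1-v2)"
  have v12': "v2 - v1 \<noteq> 0" "v1 - v2 \<noteq> 0" using v12 by auto
  have c12: "cnj v1 - cnj v2 = - R*D1/(p1*p2*p4)" using nz unfolding cv D1_def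
    by (simp add: field_simps)
  have c12nz: "cnj v1 - cnj v2 \<noteq> 0" using v12 by (metis complex_cnj_cancel_iff eq_iff_diff_eq_0)
  have D1nz: "D1 \<noteq> 0" using c12 c12nz by auto
  have qf: "q = (v1*v2*(p4-p2) + p2*p4*(v2-v1))/D1"
    unfolding q c12 using nz D1nz unfolding cp cv D1_def by (simp add: field_simps)
  have cqf: "cnj q = R*(v1*v2*(p2-p4) + p1*D1)/(p1*p2*p4*(v2-v1))"
  proof -
    have "cnj q = R/p1 - ((v1*v2*(p4-p2) + p2*p4*(v2-v1))/D1 - p1)*(- R*D1/(p1*p2*p4))/(v1-v2)"
      using cq c12 qf cp(1) by simp
    moreover have "R/p1 - ((v1*v2*(p4-p2) + p2*p4*(v2-v1))/D1 - p1)*(- R*D1/(p1*p2*p4))/(v1-v2)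
       = R*(v1*v2*(p2-p4) + p1*D1)/(p1*p2*p4*(v2-v1))"
      using nz D1nz v12' by (simp add: field_simps)
    ultimately show ?thesis by simp
  qed
  have cut: "cnj (nm/dn) = R*(-v1*v2*v3*p3*p4 + v1*v2*v4*p2*p3 - v1*v3*v4*p1*p2 + v2*v3*v4*p1*p4)/(p1*p2*p3*p4*dn)"
    using nz den unfolding nm_def dn_def by (simp add: cv field_simps)
  have e1: "q - nm/dn = (v2-v1)*M1/(D1*dn)"
    unfolding qf using D1nz den unfolding nm_def dn_def M1_def by (simp add: field_simps) (simp add: D1_def algebra_simps)
  have e2: "cnj q - cnj (nm/dn) = R*D1*K1/(p1*p2*p3*p4*(v2-v1)*dn)"
  proof -
    have dnz: "dn \<noteq> 0" using den dn_def by simp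
    show ?thesis
    unfolding cqf cut using D1nz dnz nz v12' by (simp add: field_simps) (simp add: D1_def dn_def K1_def algebra_simps)
  qed
  have "(q - nm/dn) * cnj (q - nm/dn) = R*M1*K1/(p1*p2*p3*p4*dn^2)"
  proof -
    have dnz: "dn \<noteq> 0" using den dn_def by simp
    have "(q - nm/dn) * cnj (q - nm/dn) = (q - nm/dn) * (cnj q - cnj (nm/dn))" by simp
    also have "\<dots> = (v2-v1)*M1/(D1*dn) * (R*D1*K1/(p1*p2*p3*p4*(v2-v1)*dn))" using e1 e2 by simp
    also have "\<dots> = R*M1*K1/(p1*p2*p3*p4*dn^2)" using D1nz dnz nz v12' by (simp add: field_simps power2_eq_square)
    finally show ?thesis .
  qed
  thus ?thesis unfolding nm_def dn_def M1_def K1_def by simp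
qed


definition utf :: "complex \<Rightarrow> complex \<Rightarrow> complex \<Rightarrow> complex \<Rightarrow> complex" where
  "utf v1 v2 v3 v4 = (- v1*v2*v3 + v1*v2*v4 - v1*v3*v4 + v2*v3*v4)/(v2*v4 - v1*v3)"

definition Ff :: "complex \<Rightarrow> complex \<Rightarrow> complex \<Rightarrow> complex \<Rightarrow> complex \<Rightarrow> complex \<Rightarrow> complex \<Rightarrow> complex \<Rightarrow> complex \<Rightarrow> complex" where
  "Ff p1 p2 p3 p4 v1 v2 v3 v4 R = R * (p2*p4*(v2*v4 - v1*v3) + p4*v2*v3*(v1-v4) - p2*v1*v4*(v2-v3))
       * (p1*p3*(v2*v4 - v1*v3) + p3*v1*v2*(v3-v4) + p1*v3*v4*(v1-v2))
       / (p1*p2*p3*p4*(v2*v4 - v1*v3)^2)"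

lemma utf_rot: "utf v2 v3 v4 v1 = utf v1 v2 v3 v4"
proof -
  have "v3*v1 - v2*v4 = - (v2*v4 - v1*v3)" by simp
  moreover have "- v2*v3*v4 + v2*v3*v1 - v2*v4*v1 + v3*v4*v1 = - (- v1*v2*v3 + v1*v2*v4 - v1*v3*v4 + v2*v3*v4)"
    by (simp add: algebra_simps)
  ultimately show ?thesis unfolding utf_def by (metis minus_divide_divide)
qed

lemma Ff_rot: "Ff p2 p3 p4 p1 v2 v3 v4 v1 R = Ff p1 p2 p3 p4 v1 v2 v3 v4 R"
proof -
  have a: "(v3*v1 - v2*v4)^2 = (v2*v4 - v1*v3)^2" by (simp add: power2_eq_square algebra_simps)
  have b: "(p3*p1*(v3*v1 - v2*v4) + p1*v3*v4*(v2-v1) - p3*v2*v1*(v3-v4))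
          = - (p1*p3*(v2*v4 - v1*v3) + p3*v1*v2*(v3-v4) + p1*v3*v4*(v1-v2))" by (simp add: algebra_simps)
  have c: "(p2*p4*(v3*v1 - v2*v4) + p4*v2*v3*(v4-v1) + p2*v4*v1*(v2-v3))
          = - (p2*p4*(v2*v4 - v1*v3) + p4*v2*v3*(v1-v4) - p2*v1*v4*(v2-v3))" by (simp add: algebra_simps)
  have d: "p2*p3*p4*p1 = p1*p2*p3*p4" by simp
  have g: "\<And>R A B X. R*(-A)*(-B)/X = R*B*A/(X::complex)" by (simp add: mult.commute mult.left_commute)
  show ?thesis unfolding Ff_def a b c d by (rule g)
qed

lemma side:
  fixes u u1 u2 u3 u4 P1 P2 P3 P4 Q :: complex and r :: real
  assumes r: "r > 0"
   and cP: "cmod (P1 - u) = r" "cmod (P2 - u) = r" "cmod (P3 - u) = r" "cmod (P4 - u) = r"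
   and c1: "cmod (P4 - u1) = cmod (P1 - u1)" and c2: "cmod (P1 - u2) = cmod (P2 - u2)"
   and c3: "cmod (P2 - u3) = cmod (P3 - u3)" and c4: "cmod (P3 - u4) = cmod (P4 - u4)"
   and cQ: "cmod (Q - u1) = cmod (P1 - u1)" "cmod (Q - u2) = cmod (P1 - u2)"
   and QP: "Q \<noteq> P1"
   and dP: "P4 \<noteq> P1" "P1 \<noteq> P2" "P2 \<noteq> P3" "P3 \<noteq> P4"
   and u12: "u1 \<noteq> u2"
   and den: "(u2-u)*(u4-u) - (u1-u)*(u3-u) \<noteq> 0"
  shows "(Q - u - utf (u1-u) (u2-u) (u3-u) (u4-u)) * cnj (Q - u - utf (u1-u) (u2-u) (u3-u) (u4-u))
       = Ff (P1-u) (P2-u) (P3-u) (P4-u) (u1-u) (u2-u) (u3-u) (u4-u) ((of_real r)^2)"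
proof -
  define R :: complex where "R = (of_real r)^2"
  have sq: "\<And>a b. cmod a = cmod b \<Longrightarrow> a * cnj a = b * cnj b"
  proof -
    fix a b :: complex assume h: "cmod a = cmod b"
    have "a * cnj a = of_real ((cmod a)^2)" by (rule complex_norm_square[symmetric])
    also have "\<dots> = of_real ((cmod b)^2)" using h by simp
    also have "\<dots> = b * cnj b" by (rule complex_norm_square)
    finally show "a * cnj a = b * cnj b" .
  qed
  have cpg: "\<And>P. cmod (P - u) = r \<Longrightarrow> P - u \<noteq> 0 \<and> cnj (P - u) = R/(P-u)"
  proof -
    fix P assume h: "cmod (P - u) = r"
    hence nz: "P - u \<noteq> 0" using r by auto
    have "(P-u) * cnj (P-u) = of_real ((cmod (P-u))^2)" by (rule complex_norm_square[symmetric])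
    hence "(P-u) * cnj (P-u) = R" unfolding R_def h of_real_power .
    thus "P - u \<noteq> 0 \<and> cnj (P - u) = R/(P-u)" using nz by (simp add: field_simps)
  qed
  note p1 = cpg[OF cP(1)] and p2 = cpg[OF cP(2)] and p3 = cpg[OF cP(3)] and p4 = cpg[OF cP(4)]
  have Rnz: "R \<noteq> 0" unfolding R_def using r by simp
  have sh: "\<And>a b c. (a - c) - (b - c) = a - (b::complex)" by simp
  have cv1: "cnj (u1-u) = R*(u1-u)/((P4-u)*(P1-u))"
  proof -
    have e: "(P4-u - (u1-u))*cnj(P4-u-(u1-u)) = (P1-u-(u1-u))*cnj(P1-u-(u1-u))"
      unfolding sh by (rule sq[OF c1])
    have n: "P4 - u \<noteq> P1 - u" using dP(1) by simp
    show ?thesis by (rule cnj_center[OF conjunct1[OF p4] conjunct1[OF p1] n conjunct2[OF p4] conjunct2[OF p1] e])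
  qed
  have cv2: "cnj (u2-u) = R*(u2-u)/((P1-u)*(P2-u))"
  proof -
    have e: "(P1-u - (u2-u))*cnj(P1-u-(u2-u)) = (P2-u-(u2-u))*cnj(P2-u-(u2-u))"
      unfolding sh by (rule sq[OF c2])
    have n: "P1 - u \<noteq> P2 - u" using dP(2) by simp
    show ?thesis by (rule cnj_center[OF conjunct1[OF p1] conjunct1[OF p2] n conjunct2[OF p1] conjunct2[OF p2] e])
  qed
  have cv3: "cnj (u3-u) = R*(u3-u)/((P2-u)*(P3-u))"
  proof -
    have e: "(P2-u - (u3-u))*cnj(P2-u-(u3-u)) = (P3-u-(u3-u))*cnj(P3-u-(u3-u))"
      unfolding sh by (rule sq[OF c3])
    have n: "P2 - u \<noteq> P3 - u" using dP(3) by simp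
    show ?thesis by (rule cnj_center[OF conjunct1[OF p2] conjunct1[OF p3] n conjunct2[OF p2] conjunct2[OF p3] e])
  qed
  have cv4: "cnj (u4-u) = R*(u4-u)/((P3-u)*(P4-u))"
  proof -
    have e: "(P3-u - (u4-u))*cnj(P3-u-(u4-u)) = (P4-u-(u4-u))*cnj(P4-u-(u4-u))"
      unfolding sh by (rule sq[OF c4])
    have n: "P3 - u \<noteq> P4 - u" using dP(4) by simp
    show ?thesis by (rule cnj_center[OF conjunct1[OF p3] conjunct1[OF p4] n conjunct2[OF p3] conjunct2[OF p4] e])
  qed
  have si1: "(Q-u - (u1-u))*cnj(Q-u-(u1-u)) = (P1-u-(u1-u))*cnj(P1-u-(u1-u))"
    unfolding sh by (rule sq[OF cQ(1)])
  have si2: "(Q-u - (u2-u))*cnj(Q-u-(u2-u)) = (P1-u-(u2-u))*cnj(P1-u-(u2-u))"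
    unfolding sh by (rule sq[OF cQ(2)])
  have QP': "Q - u \<noteq> P1 - u" using QP by simp
  have u12': "u1 - u \<noteq> u2 - u" using u12 by simp
  note s = second_int[OF si1 si2 QP' u12']
  have "(Q - u - utf (u1-u) (u2-u) (u3-u) (u4-u)) * cnj (Q - u - utf (u1-u) (u2-u) (u3-u) (u4-u))
       = Ff (P1-u) (P2-u) (P3-u) (P4-u) (u1-u) (u2-u) (u3-u) (u4-u) R"
    unfolding utf_def Ff_def
    by (rule core[OF conjunct1[OF p1] conjunct1[OF p2] conjunct1[OF p3] conjunct1[OF p4] Rnz
       conjunct2[OF p1] conjunct2[OF p2] conjunct2[OF p3] conjunct2[OF p4] cv1 cv2 cv3 cv4 u12' den s])
  thus ?thesis unfolding R_def .
qed

theorem mainTheorem10: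
  fixes u u1 u2 u3 u4 P1 P2 P3 P4 Q1 Q2 Q3 Q4 :: complex
    and r r1 r2 r3 r4 :: real
  assumes radii: "r > 0" "r1 > 0" "r2 > 0" "r3 > 0" "r4 > 0"
    and centers: "distinct [u, u1, u2, u3, u4]"
    and P1: "P1 \<in> circle u r \<inter> circle u1 r1 \<inter> circle u2 r2"
    and P2: "P2 \<in> circle u r \<inter> circle u2 r2 \<inter> circle u3 r3"
    and P3: "P3 \<in> circle u r \<inter> circle u3 r3 \<inter> circle u4 r4"
    and P4: "P4 \<in> circle u r \<inter> circle u4 r4 \<inter> circle u1 r1"
    and Q1: "Q1 \<in> circle u1 r1 \<inter> circle u2 r2"
    and Q2: "Q2 \<in> circle u2 r2 \<inter> circle u3 r3"
    and Q3: "Q3 \<in> circle u3 r3 \<inter> circle u4 r4"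
    and Q4: "Q4 \<in> circle u4 r4 \<inter> circle u1 r1"
    and general: "distinct [P1, P2, P3, P4, Q1, Q2, Q3, Q4]"
    and denom: "u*u1 - u*u2 + u*u3 - u1*u3 - u*u4 + u2*u4 \<noteq> 0"
  shows "let ut = (u*u1*u3 - u1*u2*u3 - u*u2*u4 + u1*u2*u4 - u1*u3*u4 + u2*u3*u4) /
                   (u*u1 - u*u2 + u*u3 - u1*u3 - u*u4 + u2*u4)
         in (\<exists>rt. {Q1, Q2, Q3, Q4} \<subseteq> circle ut rt)
          \<and> (\<forall>z. (u2 - z) * (u4 - z) * ((u1 - u) * (u3 - u))
                   = (u1 - z) * (u3 - z) * ((u2 - u) * (u4 - u))
                 \<longleftrightarrow> z = u \<or> z = ut)"
proof -
  define nm where "nm = u*u1*u3 - u1*u2*u3 - u*u2*u4 + u1*u2*u4 - u1*u3*u4 + u2*u3*u4"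
  define dn where "dn = u*u1 - u*u2 + u*u3 - u1*u3 - u*u4 + u2*u4"
  define ut where "ut = nm / dn"
  have dnz: "dn \<noteq> 0" using denom dn_def by simp
  have c: "cmod (P1 - u) = r" "cmod (P2 - u) = r" "cmod (P3 - u) = r" "cmod (P4 - u) = r"
    "cmod (P1 - u1) = r1" "cmod (P1 - u2) = r2" "cmod (P2 - u2) = r2" "cmod (P2 - u3) = r3"
    "cmod (P3 - u3) = r3" "cmod (P3 - u4) = r4" "cmod (P4 - u4) = r4" "cmod (P4 - u1) = r1"
    "cmod (Q1 - u1) = r1" "cmod (Q1 - u2) = r2" "cmod (Q2 - u2) = r2" "cmod (Q2 - u3) = r3"
    "cmod (Q3 - u3) = r3" "cmod (Q3 - u4) = r4" "cmod (Q4 - u4) = r4" "cmod (Q4 - u1) = r1"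
    using P1 P2 P3 P4 Q1 Q2 Q3 Q4 unfolding circle_def by auto
  have dis: "P1 \<noteq> P2" "P2 \<noteq> P3" "P3 \<noteq> P4" "P4 \<noteq> P1" "Q1 \<noteq> P1" "Q2 \<noteq> P2" "Q3 \<noteq> P3" "Q4 \<noteq> P4"
    using general by auto
  have du: "u1 \<noteq> u2" "u2 \<noteq> u3" "u3 \<noteq> u4" "u4 \<noteq> u1" using centers by auto
  have d0: "(u2-u)*(u4-u) - (u1-u)*(u3-u) = dn" unfolding dn_def by (simp add: algebra_simps)
  have utsh: "utf (u1-u) (u2-u) (u3-u) (u4-u) = ut - u"
  proof -
    have "- (u1-u)*(u2-u)*(u3-u) + (u1-u)*(u2-u)*(u4-u) - (u1-u)*(u3-u)*(u4-u) + (u2-u)*(u3-u)*(u4-u)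
          = nm - u * dn" unfolding nm_def dn_def by (simp add: algebra_simps)
    hence "utf (u1-u) (u2-u) (u3-u) (u4-u) = (nm - u*dn)/dn" unfolding utf_def d0 by simp
    also have "\<dots> = ut - u" unfolding ut_def using dnz by (simp add: field_simps)
    finally show ?thesis .
  qed
  define F where "F = Ff (P1-u) (P2-u) (P3-u) (P4-u) (u1-u) (u2-u) (u3-u) (u4-u) ((of_real r)^2)"
  have den1: "(u2-u)*(u4-u) - (u1-u)*(u3-u) \<noteq> 0" using d0 dnz by simp
  have den2: "(u3-u)*(u1-u) - (u2-u)*(u4-u) \<noteq> 0" using den1 by (simp add: algebra_simps)
  have sub: "\<And>Q. Q - u - (ut - u) = Q - ut" by simp
  have k1: "cmod (P4 - u1) = cmod (P1 - u1)" using c(12) c(5) by simp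
  have k2: "cmod (P1 - u2) = cmod (P2 - u2)" using c(6) c(7) by simp
  have k3: "cmod (P2 - u3) = cmod (P3 - u3)" using c(8) c(9) by simp
  have k4: "cmod (P3 - u4) = cmod (P4 - u4)" using c(10) c(11) by simp
  have q1a: "cmod (Q1 - u1) = cmod (P1 - u1)" using c(13) c(5) by simp
  have q1b: "cmod (Q1 - u2) = cmod (P1 - u2)" using c(14) c(6) by simp
  have q2a: "cmod (Q2 - u2) = cmod (P2 - u2)" using c(15) c(7) by simp
  have q2b: "cmod (Q2 - u3) = cmod (P2 - u3)" using c(16) c(8) by simp
  have q3a: "cmod (Q3 - u3) = cmod (P3 - u3)" using c(17) c(9) by simp
  have q3b: "cmod (Q3 - u4) = cmod (P3 - u4)" using c(18) c(10) by simp
  have q4a: "cmod (Q4 - u4) = cmod (P4 - u4)" using c(19) c(11) by simp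
  have q4b: "cmod (Q4 - u1) = cmod (P4 - u1)" using c(20) c(12) by simp
  have den3: "(u4-u)*(u2-u) - (u3-u)*(u1-u) \<noteq> 0" using den1 by (simp add: algebra_simps)
  have den4: "(u1-u)*(u3-u) - (u4-u)*(u2-u) \<noteq> 0" using den1 by (simp add: algebra_simps)
  have ur1: "utf (u2-u) (u3-u) (u4-u) (u1-u) = utf (u1-u) (u2-u) (u3-u) (u4-u)" by (rule utf_rot)
  have ur2: "utf (u3-u) (u4-u) (u1-u) (u2-u) = utf (u1-u) (u2-u) (u3-u) (u4-u)"
    using utf_rot[of "u3-u" "u4-u" "u1-u" "u2-u"] ur1 by simp
  have ur3: "utf (u4-u) (u1-u) (u2-u) (u3-u) = utf (u1-u) (u2-u) (u3-u) (u4-u)"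
    using utf_rot[of "u4-u" "u1-u" "u2-u" "u3-u"] ur2 by simp
  have fr1: "Ff (P2-u) (P3-u) (P4-u) (P1-u) (u2-u) (u3-u) (u4-u) (u1-u) ((of_real r)^2) = F"
    unfolding F_def by (rule Ff_rot)
  have fr2: "Ff (P3-u) (P4-u) (P1-u) (P2-u) (u3-u) (u4-u) (u1-u) (u2-u) ((of_real r)^2) = F"
    using Ff_rot[of "P3-u" "P4-u" "P1-u" "P2-u" "u3-u" "u4-u" "u1-u" "u2-u"] fr1 by simp
  have fr3: "Ff (P4-u) (P1-u) (P2-u) (P3-u) (u4-u) (u1-u) (u2-u) (u3-u) ((of_real r)^2) = F"
    using Ff_rot[of "P4-u" "P1-u" "P2-u" "P3-u" "u4-u" "u1-u" "u2-u" "u3-u"] fr2 by simp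
  have e1: "(Q1 - ut) * cnj (Q1 - ut) = F"
    using side[OF radii(1) c(1) c(2) c(3) c(4) k1 k2 k3 k4 q1a q1b dis(5) dis(4) dis(1) dis(2) dis(3) du(1) den1]
    unfolding F_def[symmetric] utsh sub .
  have e2: "(Q2 - ut) * cnj (Q2 - ut) = F"
    using side[OF radii(1) c(2) c(3) c(4) c(1) k2 k3 k4 k1 q2a q2b dis(6) dis(1) dis(2) dis(3) dis(4) du(2) den2]
    unfolding fr1 ur1 utsh sub .
  have e3: "(Q3 - ut) * cnj (Q3 - ut) = F"
    using side[OF radii(1) c(3) c(4) c(1) c(2) k3 k4 k1 k2 q3a q3b dis(7) dis(2) dis(3) dis(4) dis(1) du(3) den3]
    unfolding fr2 ur2 utsh sub .
  have e4: "(Q4 - ut) * cnj (Q4 - ut) = F"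
    using side[OF radii(1) c(4) c(1) c(2) c(3) k4 k1 k2 k3 q4a q4b dis(8) dis(3) dis(4) dis(1) dis(2) du(4) den4]
    unfolding fr3 ur3 utsh sub .
  have eqn: "\<And>a b. a * cnj a = b * cnj b \<Longrightarrow> cmod a = cmod b"
  proof -
    fix a b :: complex assume "a * cnj a = b * cnj b"
    hence "complex_of_real ((cmod a)^2) = complex_of_real ((cmod b)^2)" by (simp only: complex_norm_square)
    hence "(cmod a)^2 = (cmod b)^2" by (simp only: of_real_eq_iff)
    thus "cmod a = cmod b" by (simp add: power2_eq_iff_nonneg)
  qed
  have m2: "cmod (Q2 - ut) = cmod (Q1 - ut)" by (rule eqn) (simp only: e1 e2)
  have m3: "cmod (Q3 - ut) = cmod (Q1 - ut)" by (rule eqn) (simp only: e1 e3)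
  have m4: "cmod (Q4 - ut) = cmod (Q1 - ut)" by (rule eqn) (simp only: e1 e4)
  have circ: "{Q1, Q2, Q3, Q4} \<subseteq> circle ut (cmod (Q1 - ut))"
    unfolding circle_def using m2 m3 m4 by auto
  have quad: "\<And>z. (u2 - z) * (u4 - z) * ((u1 - u) * (u3 - u)) - (u1 - z) * (u3 - z) * ((u2 - u) * (u4 - u))
        = - ((z - u) * (dn * z - nm))"
    unfolding dn_def nm_def by algebra
  have roots: "\<forall>z. (u2 - z) * (u4 - z) * ((u1 - u) * (u3 - u))
                   = (u1 - z) * (u3 - z) * ((u2 - u) * (u4 - u))
                 \<longleftrightarrow> z = u \<or> z = ut"
  proof
    fix z
    have "(u2 - z) * (u4 - z) * ((u1 - u) * (u3 - u)) = (u1 - z) * (u3 - z) * ((u2 - u) * (u4 - u))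
       \<longleftrightarrow> (z - u) * (dn * z - nm) = 0"
      by (subst eq_iff_diff_eq_0) (simp only: quad neg_equal_0_iff_equal)
    also have "\<dots> \<longleftrightarrow> z = u \<or> dn * z = nm" by simp
    also have "dn * z = nm \<longleftrightarrow> z = ut" unfolding ut_def using dnz by (auto simp: eq_divide_eq mult.commute)
    finally show "(u2 - z) * (u4 - z) * ((u1 - u) * (u3 - u)) = (u1 - z) * (u3 - z) * ((u2 - u) * (u4 - u))
       \<longleftrightarrow> z = u \<or> z = ut" .
  qed
  show ?thesis unfolding Let_def using circ roots unfolding ut_def nm_def dn_def by blast
qed

end
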